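(* Let $g(z)=z^3-z^2+7z+1$, $s_1=0.275$, $s_2=2.75$, $\mathbb{C}_L=\{z:\Re z\le0\}$, $\mathbb{C}_R=\{z:\Re z>0\}$, and let $D(z_0,r)$ denote the open disc of radius $r$ centered at $z_0$. Then: (1) For all $z_0\in\mathbb{C}$ with $|z_0|=1$ and sufficiently small $\varepsilon>0$, $g(z)-z_0$ has exactly one root in $D_1=(\mathbb{C}_L\cap D(0,s_1))\cup D(0,\varepsilon)$. (2) For all $z_0\in\mathbb{C}$ with $|z_0|=1$ and sufficiently small $\varepsilon>0$, $g(z)-z_0$ has exactly two roots in $D_2=(\mathbb{C}_R\cap D(0,s_2))\setminus D(0,\varepsilon)$. (3) For all $z_0\in\mathbb{C}$ with $|z_0|=1$, $g(z)-z_0$ has no roots in $D_3=\mathbb{C}_L\setminus D(0,s_1)$. (4) For all $z_0\in\mathbb{C}$ with $|z_0|=1$, $g(z)-z_0$ has no roots in $D_4=\mathbb{C}_R\setminus D(0,s_2)$. *)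

theory Defs
  imports "HOL-Analysis.Analysis" "HOL-Computational_Algebra.Polynomial"
begin

definition gpoly :: "complex poly" where
  "gpoly = [:1, 7, -1, 1:]"

definition root_count :: "complex poly \<Rightarrow> complex set \<Rightarrow> nat" where
  "root_count p S = (\<Sum>z\<in>{z\<in>S. poly p z = 0}. order z p)"

definition CL :: "complex set" where "CL = {z. Re z \<le> 0}"
definition CR :: "complex set" where "CR = {z. Re z > 0}"

definition s1 :: real where "s1 = 0.275"
definition s2 :: real where "s2 = 2.75"

end

theory Submission
  imports Defs "HOL-Computational_Algebra.Fundamental_Theorem_Algebra"
begin
definition FF :: "real \<Rightarrow> real \<Rightarrow> real" where
 "FF x u = u^3 + (3*x^2 - 2*x - 13)*u^2 + (3*x^4 - 4*x^3 + 2*x^2 - 20*x + 51)*u + (x^6 - 2*x^5 + 15*x^4 - 12*x^3 + 47*x^2 + 14*x)"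

lemma FF_pos_right:
  fixes x u :: real
  assumes x: "x > 0" and u: "u \<ge> 0" and r: "x^2 + u \<ge> 121/16"
  shows "FF x u > 0"
proof -
  define \<rho> where "\<rho> = x^2 + u"
  define d where "d = \<rho> - 121/16"
  have d0: "d \<ge> 0" using r by (simp add: d_def \<rho>_def)
  define a where "a = 28*\<rho> - 4"
  define b where "b = 2*\<rho>^2 + 20*\<rho> - 14 - 216/25"
  define c where "c = \<rho>^3 - 13*\<rho>^2 + 51*\<rho> - 432/125"
  have a0: "a > 0" using d0 by (simp add: a_def d_def)
  have FFeq: "FF x u = 8*(x-3/5)^2*(x+6/5) + (a*x^2 - b*x + c)"
    unfolding FF_def a_def b_def c_def \<rho>_def by algebra
  have cub: "8*(x-3/5)^2*(x+6/5) \<ge> 0" using x by simp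
  have \<rho>eq: "\<rho> = 121/16 + d" by (simp add: d_def)
  have disc: "4*a*c - b^2 = 1699081931/10240000 + 163948311/32000*d + 5967673/800*d^2 + 1715*d^3 + 108*d^4"
    unfolding a_def b_def c_def \<rho>eq by algebra
  have "1699081931/10240000 + 163948311/32000*d + 5967673/800*d^2 + 1715*d^3 + 108*d^4 > 0"
    using d0 by (intro add_pos_nonneg) auto
  hence dpos: "4*a*c - b^2 > 0" using disc by simp
  have "a*(a*x^2 - b*x + c) = (a*x - b/2)^2 + (4*a*c - b^2)/4" by algebra
  also have "\<dots> > 0" using dpos by (intro add_nonneg_pos) auto
  finally have "a*x^2 - b*x + c > 0" using a0 by (simp add: zero_less_mult_iff)
  thus ?thesis using FFeq cub by linarith
qed

lemma FF_pos_left: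
  fixes x u :: real
  assumes x: "x \<le> 0" and u: "u \<ge> 0" and r: "x^2 + u \<ge> (11/40)^2"
  shows "FF x u > 0"
proof -
  define t where "t = -x"
  have t0: "t \<ge> 0" using x by (simp add: t_def)
  have xt: "x = -t" by (simp add: t_def)
  define P1 where "P1 = u*(u^2 - 13*u + 51)"
  define P2 where "P2 = (3*t^2+2*t)*u^2 + (3*t^4+4*t^3+2*t^2)*u + t^6 + 2*t^5"
  define Q where "Q = 15*t^4+12*t^3+47*t^2-14*t"
  have FFeq: "FF x u = P1 + P2 + 20*t*u + Q" unfolding FF_def P1_def P2_def Q_def xt by algebra
  have P2: "P2 \<ge> 0" unfolding P2_def using t0 u by (intro add_nonneg_nonneg) auto
  have tu: "20*t*u \<ge> 0" using t0 u by simp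
  show ?thesis
  proof (cases "t \<ge> 11/40")
    case True
    have "t^2 \<ge> (11/40)^2" "t^3 \<ge> (11/40)^3" using True by (intro power_mono; simp)+
    moreover have "(11/40::real)^2 = 121/1600" "(11/40::real)^3 = 1331/64000" by (simp_all add: power2_eq_square power3_eq_cube)
    ultimately have "15*t^3+12*t^2+47*t-14 > 0" using True by linarith
    hence "t*(15*t^3+12*t^2+47*t-14) > 0" using True by simp
    moreover have "Q = t*(15*t^3+12*t^2+47*t-14)" unfolding Q_def by algebra
    moreover have "P1 \<ge> 0"
    proof -
      have "P1 = 35/4*u + u*(u - 13/2)^2" unfolding P1_def by algebra
      moreover have "u*(u - 13/2)^2 \<ge> 0" using u by simp
      ultimately show ?thesis using u by linarith
    qed
    ultimately show ?thesis using FFeq P2 tu by linarith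
  next
    case False
    hence ts: "t < 11/40" by simp
    have ub: "u \<ge> (11/40)^2 - t^2" using r xt by simp
    show ?thesis
    proof (cases "u \<ge> 1")
      case True
      have "P1 = 35/4*u + u*(u - 13/2)^2" unfolding P1_def by algebra
      moreover have "u*(u - 13/2)^2 \<ge> 0" using u by simp
      moreover have "Q \<ge> -14*t" unfolding Q_def using t0 by simp
      ultimately show ?thesis using FFeq P2 tu True ts by linarith
    next
      case False
      have "P1 = 38*u + u^3 + 13*u*(1-u)" unfolding P1_def by algebra
      moreover have "u^3 \<ge> 0" "13*u*(1-u) \<ge> 0" using u False by auto
      ultimately have P1: "P1 \<ge> 38*u" by linarith
      have "(38 + 20*t)*(u - ((11/40)^2 - t^2)) \<ge> 0" using t0 ub by simp
      hence h1: "38*u + 20*t*u \<ge> (38 + 20*t)*((11/40)^2 - t^2)" by (simp add: algebra_simps)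
      define e where "e = 11/40 - t"
      have e0: "e > 0" "e \<le> 11/40" using ts t0 by (auto simp: e_def)
      have te: "t = 11/40 - e" by (simp add: e_def)
      have heq: "(38 + 20*t)*((11/40)^2 - t^2) + Q = 20339/512000 + 5187/640*e + e^2*(1473/160 - 17/2*e) + 15*e^4"
        unfolding Q_def te by algebra
      have "e^2*(1473/160 - 17/2*e) \<ge> 0" using e0 by (intro mult_nonneg_nonneg) auto
      moreover have "5187/640*e \<ge> 0" "15*e^4 \<ge> 0" using e0 by auto
      ultimately have "(38 + 20*t)*((11/40)^2 - t^2) + Q > 0" using heq by linarith
      thus ?thesis using FFeq P2 P1 h1 by linarith
    qed
  qed
qed
lemma modsq: fixes z::complex shows "(cmod (z^3 - z^2 + 7*z + 1))^2 - 1 = FF (Re z) ((Im z)^2)"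
proof -
  obtain x y where z: "z = Complex x y" by (cases z)
  have re: "Re (z^3 - z^2 + 7*z + 1) = x^3 - 3*x*y^2 - x^2 + y^2 + 7*x + 1"
    by (simp add: z power3_eq_cube power2_eq_square algebra_simps)
  have im: "Im (z^3 - z^2 + 7*z + 1) = y*(3*x^2 - y^2 - 2*x + 7)"
    by (simp add: z power3_eq_cube power2_eq_square algebra_simps)
  have "(cmod (z^3 - z^2 + 7*z + 1))^2 - 1 = (x^3 - 3*x*y^2 - x^2 + y^2 + 7*x + 1)^2 + (y*(3*x^2 - y^2 - 2*x + 7))^2 - 1"
    by (simp only: cmod_power2 re im)
  also have "\<dots> = FF x (y^2)" unfolding FF_def by algebra
  finally show ?thesis by (simp add: z)
qed

lemma pp: "poly (gpoly - [:z0:]) z = z^3 - z^2 + 7*z + 1 - z0"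
  by (simp add: gpoly_def algebra_simps power3_eq_cube power2_eq_square)

lemma root_FF:
  assumes "cmod z0 = 1" "poly (gpoly - [:z0:]) z = 0"
  shows "FF (Re z) ((Im z)^2) = 0"
proof -
  have "z^3 - z^2 + 7*z + 1 - z0 = 0" using assms(2) by (simp only: pp)
  hence "z^3 - z^2 + 7*z + 1 = z0" by simp
  thus ?thesis using modsq[of z] assms(1) by simp
qed

lemma noroot_left:
  assumes "cmod z0 = 1" "Re z \<le> 0" "cmod z \<ge> s1"
  shows "poly (gpoly - [:z0:]) z \<noteq> 0"
proof
  assume "poly (gpoly - [:z0:]) z = 0"
  hence "FF (Re z) ((Im z)^2) = 0" using root_FF assms(1) by blast
  moreover have "(Re z)^2 + (Im z)^2 \<ge> (11/40)^2"
  proof -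
    have "(cmod z)^2 \<ge> (11/40)^2" using assms(3) unfolding s1_def by (intro power_mono) auto
    thus ?thesis by (simp add: cmod_power2)
  qed
  ultimately show False using FF_pos_left[of "Re z" "(Im z)^2"] assms(2) by simp
qed

lemma noroot_right:
  assumes "cmod z0 = 1" "Re z > 0" "cmod z \<ge> s2"
  shows "poly (gpoly - [:z0:]) z \<noteq> 0"
proof
  assume "poly (gpoly - [:z0:]) z = 0"
  hence "FF (Re z) ((Im z)^2) = 0" using root_FF assms(1) by blast
  moreover have "(Re z)^2 + (Im z)^2 \<ge> 121/16"
  proof -
    have "(cmod z)^2 \<ge> (11/4)^2" using assms(3) unfolding s2_def by (intro power_mono) auto
    moreover have "(cmod z)^2 = (Re z)^2 + (Im z)^2" by (rule cmod_power2)
    moreover have "(11/4::real)^2 = 121/16" by (simp add: power2_eq_square)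
    ultimately show ?thesis by linarith
  qed
  ultimately show False using FF_pos_right[of "Re z" "(Im z)^2"] assms(2) by simp
qed

lemma small_bound:
  fixes z w :: complex
  assumes "cmod z < s1" "cmod w < s1"
  shows "cmod (z^2 + z*w + w^2 - z - w) < 7"
proof -
  have "cmod (z^2 + z*w + w^2 - z - w) \<le> cmod (z^2 + z*w + w^2 - z) + cmod w" by (rule norm_triangle_ineq4)
  also have "\<dots> \<le> cmod (z^2 + z*w + w^2) + cmod z + cmod w" using norm_triangle_ineq4[of "z^2 + z*w + w^2" z] by simp
  also have "\<dots> \<le> cmod (z^2 + z*w) + cmod (w^2) + cmod z + cmod w" using norm_triangle_ineq[of "z^2 + z*w" "w^2"] by simp
  also have "\<dots> \<le> cmod (z^2) + cmod (z*w) + cmod (w^2) + cmod z + cmod w" using norm_triangle_ineq[of "z^2" "z*w"] by simp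
  also have "\<dots> = cmod z * cmod z + cmod z * cmod w + cmod w * cmod w + cmod z + cmod w" by (simp add: norm_mult norm_power power2_eq_square)
  also have "\<dots> < 7"
  proof -
    have a: "cmod z * cmod z \<le> 11/40 * (11/40)" "cmod z * cmod w \<le> 11/40 * (11/40)" "cmod w * cmod w \<le> 11/40 * (11/40)"
      using assms unfolding s1_def by (intro mult_mono; simp add: less_imp_le)+
    thus ?thesis using assms unfolding s1_def by simp
  qed
  finally show ?thesis .
qed


lemma prod3: fixes r1 r2 r3 :: complex shows
  "[:-r1,1:] * [:-r2,1:] * [:-r3,1:] = [:-r1*r2*r3, r1*r2+r1*r3+r2*r3, -(r1+r2+r3), 1:]"
  by (simp add: field_simps)
lemma vieta:
  fixes z0 :: complex
  obtains r1 r2 r3 where "proots (gpoly - [:z0:]) = {#r1, r2, r3#}"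
    "r1 + r2 + r3 = 1" "r1*r2 + r1*r3 + r2*r3 = 7" "r1*r2*r3 = z0 - 1"
proof -
  define p where "p = gpoly - [:z0:]"
  have peq: "p = [:1 - z0, 7, -1, 1:]" by (simp add: p_def gpoly_def)
  have deg: "degree p = 3" and lc: "lead_coeff p = 1" by (simp_all add: peq)
  have "size (proots p) = Suc (Suc (Suc 0))" using deg by (simp add: size_proots_complex)
  then obtain r1 N1 where A1: "proots p = add_mset r1 N1"
    using size_eq_Suc_imp_eq_union by blast
  hence "size N1 = Suc (Suc 0)" using \<open>size (proots p) = _\<close> by simp
  then obtain r2 N2 where A2: "N1 = add_mset r2 N2"
    using size_eq_Suc_imp_eq_union by blast
  hence "size N2 = Suc 0" using \<open>size N1 = _\<close> by simp
  then obtain r3 N3 where A3: "N2 = add_mset r3 N3"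
    using size_eq_Suc_imp_eq_union by blast
  hence "N3 = {#}" using \<open>size N2 = _\<close> by simp
  with A1 A2 A3 have M: "proots p = {#r1, r2, r3#}" by simp
  have "p = smult (lead_coeff p) (\<Prod>x\<in>#proots p. [:-x, 1:])"
    by (rule complex_poly_decompose_multiset [symmetric])
  also have "\<dots> = [:-r1*r2*r3, r1*r2+r1*r3+r2*r3, -(r1+r2+r3), 1:]"
    by (simp add: lc M; simp add: algebra_simps)
  finally have "[:1 - z0, 7, -1, 1:] = [:-r1*r2*r3, r1*r2+r1*r3+r2*r3, -(r1+r2+r3), 1:]" by (simp add: peq)
  hence e: "1 - z0 = -r1*r2*r3" "7 = r1*r2 + r1*r3 + r2*r3" "-1 = -(r1+r2+r3)"
    by simp_all
  show ?thesis
  proof (rule that)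
    show "proots (gpoly - [:z0:]) = {#r1, r2, r3#}" using M p_def by simp
    show "r1 + r2 + r3 = 1" using e(3) neg_equal_iff_equal by metis
    show "r1*r2 + r1*r3 + r2*r3 = 7" using e(2) by simp
    show "r1*r2*r3 = z0 - 1" using e(1) by (simp add: algebra_simps)
  qed
qed
lemma rc:
  fixes p :: "complex poly"
  assumes "p \<noteq> 0"
  shows "root_count p S = size (filter_mset (\<lambda>z. z \<in> S) (proots p))"
proof -
  define N where "N = filter_mset (\<lambda>z. z \<in> S) (proots p)"
  have setN: "set_mset N = {z\<in>S. poly p z = 0}" using assms by (auto simp: N_def)
  have "size N = (\<Sum>z\<in>set_mset N. count N z)" by (simp add: size_multiset_overloaded_eq)
  also have "\<dots> = (\<Sum>z\<in>{z\<in>S. poly p z = 0}. order z p)"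
    unfolding setN using assms by (intro sum.cong) (auto simp: N_def)
  finally show ?thesis unfolding root_count_def N_def by simp
qed

lemma per_z0:
  assumes z0: "cmod z0 = 1" and e: "0 < e" "e < s1"
  shows "root_count (gpoly - [:z0:]) ((CL \<inter> ball 0 s1) \<union> ball 0 e) = 1 \<and>
         root_count (gpoly - [:z0:]) ((CR \<inter> ball 0 s2) - ball 0 e) = 2"
proof -
  define p where "p = gpoly - [:z0:]"
  have p0: "p \<noteq> 0" by (simp add: p_def gpoly_def)
  obtain r1 r2 r3 where M: "proots p = {#r1, r2, r3#}" and
    v1: "r1 + r2 + r3 = 1" and v2: "r1*r2 + r1*r3 + r2*r3 = 7" and v3: "r1*r2*r3 = z0 - 1"
    using vieta[of z0] p_def by metis
  have roots: "poly p r = 0" if "r \<in> {r1, r2, r3}" for r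
  proof -
    have "r \<in># proots p" using that M by auto
    thus ?thesis using p0 by simp
  qed
  have FL: "Re r \<le> 0 \<Longrightarrow> cmod r < s1" if "r \<in> {r1, r2, r3}" for r
    using noroot_left[OF z0, of r] roots[OF that] p_def by force
  have FR: "Re r > 0 \<Longrightarrow> cmod r < s2" if "r \<in> {r1, r2, r3}" for r
    using noroot_right[OF z0, of r] roots[OF that] p_def by force
  have pair: "\<not> (cmod a < s1 \<and> cmod b < s1)" if "a + b + c = 1" "a*b + a*c + b*c = 7" for a b c :: complex
  proof
    assume ab: "cmod a < s1 \<and> cmod b < s1"
    have "a^2 + a*b + b^2 - a - b = -7" using that by algebra
    hence "cmod (a^2 + a*b + b^2 - a - b) = 7" by simp
    thus False using small_bound[of a b] ab by simp
  qed
  have P12: "\<not> (cmod r1 < s1 \<and> cmod r2 < s1)" using pair[of r1 r2 r3] v1 v2 by (simp add: algebra_simps)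
  have P13: "\<not> (cmod r1 < s1 \<and> cmod r3 < s1)" using pair[of r1 r3 r2] v1 v2 by (simp add: algebra_simps)
  have P23: "\<not> (cmod r2 < s1 \<and> cmod r3 < s1)" using pair[of r2 r3 r1] v1 v2 by (simp add: algebra_simps)
  have someL: "Re r1 \<le> 0 \<or> Re r2 \<le> 0 \<or> Re r3 \<le> 0"
  proof (rule ccontr)
    assume "\<not> ?thesis"
    hence pos: "Re r1 > 0" "Re r2 > 0" "Re r3 > 0" by auto
    define N1 where "N1 = (Re r1)^2 + (Im r1)^2"
    define N2 where "N2 = (Re r2)^2 + (Im r2)^2"
    define N3 where "N3 = (Re r3)^2 + (Im r3)^2"
    have n: "N1 > 0" "N2 > 0" "N3 > 0" using pos unfolding N1_def N2_def N3_def
      by (auto intro: add_pos_nonneg)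
    have "Re ((r1*r2 + r1*r3 + r2*r3) * cnj (r1*r2*r3)) = N1*N2*Re r3 + N1*N3*Re r2 + N2*N3*Re r1"
      unfolding N1_def N2_def N3_def by (simp add: algebra_simps power2_eq_square)
    also have "\<dots> > 0" using n pos by (intro add_pos_pos mult_pos_pos)
    finally have "Re (7 * cnj (z0 - 1)) > 0" using v2 v3 by simp
    moreover have "Re z0 \<le> 1" using complex_Re_le_cmod[of z0] z0 by simp
    ultimately show False by simp
  qed
  have rcS: "root_count p S = size (filter_mset (\<lambda>z. z \<in> S) {#r1, r2, r3#})" for S
    using rc[OF p0] M by simp
  have es: "e < s1" using e by simp
  have s12: "s1 < s2" by (simp add: s1_def s2_def)
  show ?thesis
    unfolding p_def[symmetric] rcS
    using FL FR P12 P13 P23 someL es s12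
    by (auto simp: CL_def CR_def)
qed
theorem lemma3p5:
  shows "(\<forall>z0::complex. cmod z0 = 1 \<longrightarrow> (\<exists>e0>0. \<forall>e. 0 < e \<and> e < e0 \<longrightarrow>
            root_count (gpoly - [:z0:]) ((CL \<inter> ball 0 s1) \<union> ball 0 e) = 1))
       \<and> (\<forall>z0::complex. cmod z0 = 1 \<longrightarrow> (\<exists>e0>0. \<forall>e. 0 < e \<and> e < e0 \<longrightarrow>
            root_count (gpoly - [:z0:]) ((CR \<inter> ball 0 s2) - ball 0 e) = 2))
       \<and> (\<forall>z0::complex. cmod z0 = 1 \<longrightarrow> (\<forall>z\<in>CL - ball 0 s1. poly (gpoly - [:z0:]) z \<noteq> 0))
       \<and> (\<forall>z0::complex. cmod z0 = 1 \<longrightarrow> (\<forall>z\<in>CR - ball 0 s2. poly (gpoly - [:z0:]) z \<noteq> 0))"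
proof (intro conjI allI impI ballI)
  have s1p: "s1 > 0" by (simp add: s1_def)
  fix z0 :: complex assume z0: "cmod z0 = 1"
  show "\<exists>e0>0. \<forall>e. 0 < e \<and> e < e0 \<longrightarrow>
            root_count (gpoly - [:z0:]) ((CL \<inter> ball 0 s1) \<union> ball 0 e) = 1"
    using per_z0[OF z0] s1p by blast
next
  have s1p: "s1 > 0" by (simp add: s1_def)
  fix z0 :: complex assume z0: "cmod z0 = 1"
  show "\<exists>e0>0. \<forall>e. 0 < e \<and> e < e0 \<longrightarrow>
            root_count (gpoly - [:z0:]) ((CR \<inter> ball 0 s2) - ball 0 e) = 2"
    using per_z0[OF z0] s1p by blast
next
  fix z0 z :: complex assume z0: "cmod z0 = 1" and z: "z \<in> CL - ball 0 s1"
  show "poly (gpoly - [:z0:]) z \<noteq> 0"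
    using z by (intro noroot_left[OF z0]) (auto simp: CL_def)
next
  fix z0 z :: complex assume z0: "cmod z0 = 1" and z: "z \<in> CR - ball 0 s2"
  show "poly (gpoly - [:z0:]) z \<noteq> 0"
    using z by (intro noroot_right[OF z0]) (auto simp: CR_def)
qed

end
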